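(* Let $s,t,r\in\mathbb{N}$ with $s\leqslant rt$ and $r\leqslant st$. The Lie group $U(r)$ acts smoothly, freely and properly on the manifold $V_{s,t,r}$ by $U\cdot V=(U\otimes I)V$, where $U\in U(r)$, $V\in V_{s,t,r}$ and $I$ is the $t\times t$ identity matrix (in particular, $U\cdot V\in V_{s,t,r}$).
   Context: $V_{s,t,r}$ is the set of $V=[A_1;\dots;A_r]\in\mathbb{C}^{rt\times s}$ (vertical stacking of blocks $A_i\in\mathbb{C}^{t\times s}$) with $V^{\ast}V=I$ and $A_1,\dots,A_r$ linearly independent over $\mathbb{C}$; it is a smooth embedded (open) submanifold of the Stiefel manifold $\{V\in\mathbb{C}^{rt\times s}:V^{\ast}V=I\}$. An action is free if $g\cdot p=p$ implies $g$ is the identity, and proper if $(g,p)\mapsto(g\cdot p,p)$ is a proper map. *)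

theory Defs
  imports "HOL-Analysis.Analysis"
begin

definition ctrans :: "complex^'n^'m \<Rightarrow> complex^'m^'n" where
  "ctrans A = (\<chi> i j. cnj (A $ j $ i))"

definition stiefel :: "complex^'s^'m \<Rightarrow> bool" where
  "stiefel V \<longleftrightarrow> ctrans V ** V = mat 1"

definition unitary_group :: "(complex^'r^'r) set" where
  "unitary_group = {U. ctrans U ** U = mat 1}"

text \<open>Rows of V indexed by pairs (i,k): i-th block, k-th row within the block.
  The i-th t x s block A_i of V.\<close>
definition block :: "complex^'s^('r::finite \<times> 't::finite) \<Rightarrow> 'r \<Rightarrow> complex^'s^'t" where
  "block V i = (\<chi> k j. V $ (i,k) $ j)"

definition lin_indep_C :: "('r::finite \<Rightarrow> complex^'s^'t) \<Rightarrow> bool" where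
  "lin_indep_C A \<longleftrightarrow>
     (\<forall>c :: 'r \<Rightarrow> complex. (\<Sum>i\<in>UNIV. (\<chi> k j. c i * A i $ k $ j)) = 0 \<longrightarrow> (\<forall>i. c i = 0))"

definition Vstr :: "(complex^'s^('r::finite \<times> 't::finite)) set" where
  "Vstr = {V. stiefel V \<and> lin_indep_C (block V)}"

text \<open>The action (U \<otimes> I_t) V.\<close>
definition act :: "complex^'r::finite^'r \<Rightarrow> complex^'s^('r \<times> 't::finite) \<Rightarrow> complex^'s^('r \<times> 't)" where
  "act U V = (\<chi> p j. \<Sum>l\<in>UNIV. U $ fst p $ l * V $ (l, snd p) $ j)"

text \<open>Real C-infinity smoothness on an open set, via a family of iterated
  derivatives D k x [h_1,...,h_k].\<close>
definition smooth_on :: "'a::real_normed_vector set \<Rightarrow> ('a \<Rightarrow> 'b::real_normed_vector) \<Rightarrow> bool" where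
  "smooth_on S f \<longleftrightarrow> open S \<and>
     (\<exists>D :: nat \<Rightarrow> 'a \<Rightarrow> 'a list \<Rightarrow> 'b.
        (\<forall>x\<in>S. D 0 x [] = f x) \<and>
        (\<forall>k x hs. x \<in> S \<and> length hs = k \<longrightarrow>
           ((\<lambda>y. D k y hs) has_derivative (\<lambda>h. D (Suc k) x (h # hs))) (at x)))"

end

theory Submission
  imports Defs
begin


lemma ifmul1: "(a * (if c then 1 else 0)) * (b::complex) = (if c then a * b else 0)" by simp
lemma ifmul2: "cnj (a * (if c then 1 else 0)) * ((b::complex) * (if d then 1 else 0)) = (if c \<and> d then cnj a * b else 0)" by simp

definition kron :: "complex^'r::finite^'r \<Rightarrow> complex^('r\<times>'t::finite)^('r\<times>'t)" where
  "kron U = (\<chi> p q. U $ fst p $ fst q * (if snd p = snd q then 1 else 0))"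

lemma act_kron: "act U V = kron U ** (V :: complex^'s^('r::finite\<times>'t::finite))"
proof -
  have "\<And>p j. (\<Sum>l\<in>UNIV. U $ fst p $ l * V $ (l, snd p) $ j)
     = (\<Sum>q\<in>UNIV. (U $ fst p $ fst q * (if snd p = snd q then 1 else 0)) * V $ q $ j)"
  proof -
    fix p :: "'r\<times>'t" and j
    have "(\<Sum>q\<in>UNIV. (U $ fst p $ fst q * (if snd p = snd q then 1 else 0)) * V $ q $ j)
       = (\<Sum>l\<in>UNIV. \<Sum>k\<in>UNIV. (U $ fst p $ l * (if snd p = k then 1 else 0)) * V $ (l,k) $ j)"
      by (simp add: sum.cartesian_product UNIV_Times_UNIV[symmetric] case_prod_beta del: UNIV_Times_UNIV)
    also have "\<dots> = (\<Sum>l\<in>UNIV. U $ fst p $ l * V $ (l, snd p) $ j)"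
      by (simp only: ifmul1 sum.delta eq_commute[of "snd p"]) simp
    finally show "?thesis p j" by simp
  qed
  then show ?thesis by (simp add: act_def kron_def matrix_matrix_mult_def vec_eq_iff)
qed

lemma ctrans_mult: "ctrans (A ** B) = ctrans B ** ctrans (A :: complex^'n::finite^'m::finite)"
  by (simp add: ctrans_def matrix_matrix_mult_def vec_eq_iff cnj_sum mult.commute)

lemma kron_unitary:
  assumes "ctrans U ** U = mat 1"
  shows "ctrans (kron U :: complex^('r::finite\<times>'t::finite)^('r\<times>'t)) ** kron U = mat 1"
proof -
  have u: "\<And>a b. (\<Sum>i\<in>UNIV. cnj (U $ i $ a) * U $ i $ b) = (if a = b then 1 else 0)"
    using assms by (simp add: vec_eq_iff ctrans_def matrix_matrix_mult_def mat_def)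
  have "\<And>p q::'r\<times>'t. (\<Sum>x\<in>UNIV. cnj (kron U $ x $ p) * kron U $ x $ q) = (if p = q then 1 else 0)"
  proof -
    fix p q :: "'r\<times>'t"
    have "(\<Sum>x\<in>UNIV. cnj (kron U $ x $ p) * kron U $ x $ q)
       = (\<Sum>i\<in>UNIV. \<Sum>k\<in>UNIV. cnj (U $ i $ fst p * (if k = snd p then 1 else 0)) * (U $ i $ fst q * (if k = snd q then 1 else 0)))"
      by (simp add: kron_def sum.cartesian_product UNIV_Times_UNIV[symmetric] case_prod_beta del: UNIV_Times_UNIV)
    also have "\<dots> = (\<Sum>i\<in>UNIV. if snd p = snd q then cnj (U $ i $ fst p) * U $ i $ fst q else 0)"
      by (simp only: ifmul2) (auto intro!: sum.cong sum.neutral)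
    also have "\<dots> = (if p = q then 1 else 0)"
      using u[of "fst p" "fst q"] by (cases "snd p = snd q"; auto simp: prod_eq_iff)
    finally show "?thesis p q" .
  qed
  then show ?thesis by (simp add: vec_eq_iff ctrans_def matrix_matrix_mult_def mat_def)
qed

lemma act_stiefel:
  assumes "ctrans U ** U = mat 1" "stiefel (V :: complex^'s::finite^('r::finite\<times>'t::finite))"
  shows "stiefel (act U V)"
  using assms unfolding stiefel_def act_kron ctrans_mult
  by (metis kron_unitary matrix_mul_assoc matrix_mul_lid)



lemma lin_indep_sum_eq:
  fixes V :: "complex^'s::finite^('r::finite\<times>'t::finite)"
  shows "(\<Sum>i\<in>UNIV. (\<chi> k j. c i * block (act U V) i $ k $ j))
       = (\<Sum>l\<in>UNIV. (\<chi> k j. (\<Sum>i\<in>UNIV. c i * U $ i $ l) * block V l $ k $ j))"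
proof -
  have "\<And>k j. (\<Sum>i\<in>UNIV. c i * (\<Sum>l\<in>UNIV. U $ i $ l * V $ (l, k) $ j))
     = (\<Sum>l\<in>UNIV. (\<Sum>i\<in>UNIV. c i * U $ i $ l) * V $ (l, k) $ j)"
    by (simp add: sum_distrib_left sum_distrib_right mult.assoc, rule sum.swap)
  then show ?thesis by (simp add: vec_eq_iff block_def act_def)
qed

lemma act_indep:
  assumes "ctrans U ** U = mat 1" "lin_indep_C (block (V :: complex^'s::finite^('r::finite\<times>'t::finite)))"
  shows "lin_indep_C (block (act U V))"
  unfolding lin_indep_C_def
proof (intro allI impI)
  fix c :: "'r \<Rightarrow> complex"
  assume "(\<Sum>i\<in>UNIV. (\<chi> k j. c i * block (act U V) i $ k $ j)) = 0"
  then have h: "(\<Sum>l\<in>UNIV. (\<chi> k j. (\<lambda>l. \<Sum>i\<in>UNIV. c i * U $ i $ l) l * block V l $ k $ j)) = 0"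
    unfolding lin_indep_sum_eq by simp
  have d: "\<And>l. (\<Sum>i\<in>UNIV. c i * U $ i $ l) = 0"
    using assms(2)[unfolded lin_indep_C_def, rule_format, OF h] .
  have uu: "U ** ctrans U = mat 1" using assms(1) matrix_left_right_inverse by blast
  have u: "\<And>a b. (\<Sum>l\<in>UNIV. U $ a $ l * cnj (U $ b $ l)) = (if a = b then 1 else 0)"
    using uu by (simp add: vec_eq_iff ctrans_def matrix_matrix_mult_def mat_def)
  fix j
  have "c j = (\<Sum>i\<in>UNIV. c i * (\<Sum>l\<in>UNIV. U $ i $ l * cnj (U $ j $ l)))"
    by (simp add: u if_distrib cong: if_cong)
  also have "\<dots> = (\<Sum>l\<in>UNIV. (\<Sum>i\<in>UNIV. c i * U $ i $ l) * cnj (U $ j $ l))"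
    by (simp add: sum_distrib_left sum_distrib_right mult.assoc, rule sum.swap)
  also have "\<dots> = 0" by (simp add: d)
  finally show "c j = 0" .
qed

lemma act_free:
  assumes "lin_indep_C (block (V :: complex^'s::finite^('r::finite\<times>'t::finite)))"
    and "act U V = V"
  shows "U = mat 1"
proof -
  have "\<And>i. U $ i = mat 1 $ i"
  proof -
    fix i
    define c where "c l = U $ i $ l - (if l = i then 1 else 0)" for l
    have "(\<Sum>l\<in>UNIV. (\<chi> k j. c l * block V l $ k $ j)) = 0"
    proof -
      have "\<And>k j. (\<Sum>l\<in>UNIV. c l * V $ (l,k) $ j) = 0"
      proof -
        fix k j
        have "act U V $ (i,k) $ j = V $ (i,k) $ j" using assms(2) by simp
        then have e: "(\<Sum>l\<in>UNIV. U $ i $ l * V $ (l, k) $ j) = V $ (i,k) $ j"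
          by (simp add: act_def)
        have "(\<Sum>l\<in>UNIV. c l * V $ (l,k) $ j) = (\<Sum>l\<in>UNIV. U $ i $ l * V $ (l, k) $ j
             - (if l = i then V $ (l,k) $ j else 0))"
          by (rule sum.cong) (auto simp: c_def algebra_simps)
        also have "\<dots> = (\<Sum>l\<in>UNIV. U $ i $ l * V $ (l, k) $ j)
             - (\<Sum>l\<in>UNIV. (if l = i then V $ (l,k) $ j else 0))"
          by (rule sum_subtractf)
        finally show "?thesis k j" using e by simp
      qed
      then show ?thesis by (simp add: vec_eq_iff block_def)
    qed
    then have "\<And>l. c l = 0" using assms(1) unfolding lin_indep_C_def by blast
    then show "U $ i = mat 1 $ i" by (simp add: vec_eq_iff c_def mat_def)
  qed
  then show ?thesis by (simp add: vec_eq_iff)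
qed



lemma act_bb: "bounded_bilinear (act :: complex^'r::finite^'r \<Rightarrow> complex^'s::finite^('r \<times> 't::finite) \<Rightarrow> _)"
proof -
  have "bilinear (act :: complex^'r::finite^'r \<Rightarrow> complex^'s::finite^('r \<times> 't::finite) \<Rightarrow> _)"
    unfolding bilinear_def
    by (auto intro!: linearI simp: vec_eq_iff act_def algebra_simps sum.distrib
          vector_scaleR_component scaleR_sum_right)
  then show ?thesis using bilinear_conv_bounded_bilinear by blast
qed

definition Dact :: "nat \<Rightarrow> (complex^'r::finite^'r) \<times> (complex^'s::finite^('r \<times> 't::finite))
    \<Rightarrow> ((complex^'r^'r) \<times> (complex^'s^('r \<times> 't))) list \<Rightarrow> complex^'s^('r \<times> 't)" where
  "Dact k y hs = (if k = 0 then act (fst y) (snd y)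
     else if k = 1 then act (fst (hs!0)) (snd y) + act (fst y) (snd (hs!0))
     else if k = 2 then act (fst (hs!0)) (snd (hs!1)) + act (fst (hs!1)) (snd (hs!0))
     else 0)"

lemma act_smooth: "smooth_on UNIV (\<lambda>(U :: complex^'r::finite^'r, V :: complex^'s::finite^('r \<times> 't::finite)). act U V)"
  unfolding smooth_on_def
proof (intro conjI open_UNIV exI[of _ Dact] ballI allI impI)
  interpret b: bounded_bilinear act by (rule act_bb)
  fix x :: "(complex^'r::finite^'r) \<times> (complex^'s::finite^('r \<times> 't::finite))"
  show "Dact 0 x [] = (case x of (U, V) \<Rightarrow> act U V)" by (simp add: Dact_def split: prod.splits)
next
  interpret b: bounded_bilinear "act :: complex^'r::finite^'r \<Rightarrow> complex^'s::finite^('r \<times> 't::finite) \<Rightarrow> _" by (rule act_bb)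
  fix k and x :: "(complex^'r::finite^'r) \<times> (complex^'s::finite^('r \<times> 't::finite))"
    and hs :: "((complex^'r::finite^'r) \<times> (complex^'s::finite^('r \<times> 't::finite))) list"
  assume a: "x \<in> UNIV \<and> length hs = k"
  consider "k = 0" | "k = 1" | "k = 2" | "k \<ge> 3" by linarith
  then show "((\<lambda>y. Dact k y hs) has_derivative (\<lambda>h. Dact (Suc k) x (h # hs))) (at x)"
  proof cases
    case 1
    have "((\<lambda>y. act (fst y) (snd y)) has_derivative (\<lambda>h. act (fst x) (snd h) + act (fst h) (snd x))) (at x)"
      by (rule b.FDERIV has_derivative_fst has_derivative_snd has_derivative_ident)+
    then show ?thesis using 1 by (simp add: Dact_def add.commute)
  next
    case 2
    then obtain g where g: "hs = [g]" using a by (cases hs) auto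
    have "((\<lambda>y. act (fst g) (snd y) + act (fst y) (snd g)) has_derivative
           (\<lambda>h. act (fst g) (snd h) + act (fst h) (snd g))) (at x)"
    proof (intro has_derivative_add bounded_linear_imp_has_derivative)
      show "bounded_linear (\<lambda>y :: (complex^'r^'r) \<times> (complex^'s^('r\<times>'t)). act (fst g) (snd y))"
        using bounded_linear_compose[OF b.bounded_linear_right[of "fst g"] bounded_linear_snd[where 'a="complex^'r^'r"]] by (simp add: o_def)
      show "bounded_linear (\<lambda>y :: (complex^'r^'r) \<times> (complex^'s^('r\<times>'t)). act (fst y) (snd g))"
        using bounded_linear_compose[OF b.bounded_linear_left[of "snd g"] bounded_linear_fst[where 'b="complex^'s^('r\<times>'t)"]] by (simp add: o_def)
    qed
    then show ?thesis using 2 g by (simp add: Dact_def add.commute)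
  next
    case 3
    then show ?thesis by (simp add: Dact_def)
  next
    case 4
    then show ?thesis by (simp add: Dact_def)
  qed
qed



lemma norm_vec_le_sum: "norm (x :: 'a::real_normed_vector^'n::finite) \<le> (\<Sum>i\<in>UNIV. norm (x $ i))"
  unfolding norm_vec_def by (rule L2_set_le_sum) simp

lemma unit_entry:
  assumes "ctrans A ** A = mat 1"
  shows "norm ((A :: complex^'n::finite^'m::finite) $ i $ j) \<le> 1"
proof -
  have "(\<Sum>k\<in>UNIV. A $ k $ j * cnj (A $ k $ j)) = 1"
    using assms by (simp add: vec_eq_iff ctrans_def matrix_matrix_mult_def mat_def mult.commute)
  then have "(\<Sum>k\<in>UNIV. complex_of_real (norm (A $ k $ j) ^ 2)) = 1"
    by (simp only: complex_norm_square)
  then have "complex_of_real (\<Sum>k\<in>UNIV. norm (A $ k $ j) ^ 2) = 1" by simp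
  then have s: "(\<Sum>k\<in>UNIV. norm (A $ k $ j) ^ 2) = 1" using of_real_eq_1_iff by blast
  have "norm (A $ i $ j) ^ 2 \<le> (\<Sum>k\<in>UNIV. norm (A $ k $ j) ^ 2)"
    by (rule member_le_sum) auto
  then have "norm (A $ i $ j) ^ 2 \<le> 1 ^ 2" using s by simp
  then show ?thesis by (rule power2_le_imp_le) simp
qed

lemma unit_norm:
  assumes "ctrans A ** A = mat 1"
  shows "norm (A :: complex^'n::finite^'m::finite) \<le> real CARD('m) * real CARD('n)"
proof -
  have "norm A \<le> (\<Sum>i\<in>UNIV. norm (A $ i))" by (rule norm_vec_le_sum)
  also have "\<dots> \<le> (\<Sum>i\<in>(UNIV::'m set). (\<Sum>j\<in>(UNIV::'n set). 1))"
  proof (rule sum_mono)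
    fix i
    have "norm (A $ i) \<le> (\<Sum>j\<in>UNIV. norm (A $ i $ j))" by (rule norm_vec_le_sum)
    also have "\<dots> \<le> (\<Sum>j\<in>(UNIV::'n set). 1)" by (rule sum_mono) (rule unit_entry[OF assms])
    finally show "norm (A $ i) \<le> (\<Sum>j\<in>(UNIV::'n set). 1)" .
  qed
  also have "\<dots> = real CARD('m) * real CARD('n)" by simp
  finally show ?thesis .
qed

lemma closed_unitary: "closed (unitary_group :: (complex^'r::finite^'r) set)"
proof -
  have "closed {U :: complex^'r^'r. ctrans U ** U = mat 1}"
    unfolding ctrans_def matrix_matrix_mult_def
    by (intro closed_Collect_eq continuous_intros)
  then show ?thesis by (simp add: unitary_group_def)
qed

lemma proper_compact:
  assumes "compact K" "K \<subseteq> (Vstr :: (complex^'s::finite^('r::finite \<times> 't::finite)) set) \<times> Vstr"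
  shows "compact {(U, V). U \<in> (unitary_group :: (complex^'r^'r) set) \<and> V \<in> Vstr \<and> (act U V, V) \<in> K}"
proof -
  interpret b: bounded_bilinear "act :: complex^'r::finite^'r \<Rightarrow> complex^'s::finite^('r \<times> 't::finite) \<Rightarrow> _" by (rule act_bb)
  let ?S = "{(U, V). U \<in> (unitary_group :: (complex^'r^'r) set) \<and> V \<in> Vstr \<and> (act U V, V) \<in> K}"
  let ?f = "\<lambda>x :: (complex^'r^'r) \<times> (complex^'s^('r \<times> 't)). (act (fst x) (snd x), snd x)"
  have eq: "?S = (unitary_group \<times> UNIV) \<inter> ?f -` K" using assms(2) by auto
  have c: "continuous_on UNIV ?f"
    by (intro continuous_intros b.continuous_on)
  have "closed (?f -` K)"
    by (rule closed_vimage[OF compact_imp_closed[OF assms(1)] c])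
  then have cl: "closed ?S" unfolding eq
    by (intro closed_Int closed_Times closed_unitary closed_UNIV)
  have "bounded ?S"
    unfolding bounded_iff
  proof (intro exI ballI)
    fix x assume "x \<in> ?S"
    then have u: "ctrans (fst x) ** fst x = mat 1" and v: "ctrans (snd x) ** snd x = mat 1"
      by (auto simp: unitary_group_def Vstr_def stiefel_def)
    have "norm x \<le> norm (fst x) + norm (snd x)" by (cases x) (simp add: norm_Pair_le)
    also have "\<dots> \<le> real CARD('r) * real CARD('r) + real (CARD('r \<times> 't)) * real CARD('s)"
      using unit_norm[OF u] unit_norm[OF v] by linarith
    finally show "norm x \<le> real CARD('r) * real CARD('r) + real (CARD('r \<times> 't)) * real CARD('s)" .
  qed
  then show ?thesis using cl compact_eq_bounded_closed by blast
qed


theorem proposition6: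
  assumes "CARD('s::finite) \<le> CARD('r::finite) * CARD('t::finite)"
      and "CARD('r) \<le> CARD('s) * CARD('t)"
  shows "(\<forall>U\<in>(unitary_group :: (complex^'r^'r) set). \<forall>V\<in>(Vstr :: (complex^'s^('r \<times> 't)) set).
            act U V \<in> Vstr)
     \<and> smooth_on UNIV (\<lambda>(U :: complex^'r^'r, V :: complex^'s^('r \<times> 't)). act U V)
     \<and> (\<forall>U\<in>(unitary_group :: (complex^'r^'r) set). \<forall>V\<in>(Vstr :: (complex^'s^('r \<times> 't)) set).
            act U V = V \<longrightarrow> U = mat 1)
     \<and> (\<forall>K :: ((complex^'s^('r \<times> 't)) \<times> (complex^'s^('r \<times> 't))) set.
            compact K \<and> K \<subseteq> Vstr \<times> Vstr \<longrightarrow>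
            compact {(U, V). U \<in> (unitary_group :: (complex^'r^'r) set) \<and> V \<in> Vstr \<and> (act U V, V) \<in> K})"
  proof (intro conjI ballI allI impI)
  fix U :: "complex^'r^'r" and V :: "complex^'s^('r \<times> 't)"
  assume "U \<in> unitary_group" "V \<in> Vstr"
  then show "act U V \<in> Vstr"
    using act_stiefel act_indep by (auto simp: unitary_group_def Vstr_def)
next
  show "smooth_on UNIV (\<lambda>(U :: complex^'r^'r, V :: complex^'s^('r \<times> 't)). act U V)"
    by (rule act_smooth)
next
  fix U :: "complex^'r^'r" and V :: "complex^'s^('r \<times> 't)"
  assume "U \<in> unitary_group" "V \<in> Vstr" "act U V = V"
  then show "U = mat 1" using act_free by (auto simp: Vstr_def)
next
  fix K :: "((complex^'s^('r \<times> 't)) \<times> (complex^'s^('r \<times> 't))) set"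
  assume "compact K \<and> K \<subseteq> Vstr \<times> Vstr"
  then show "compact {(U, V). U \<in> (unitary_group :: (complex^'r^'r) set) \<and> V \<in> Vstr \<and> (act U V, V) \<in> K}"
    using proper_compact by blast
qed

end
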